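(* Let $T$ be a tree, let $G$ be the graph obtained from $T$ by adding a new vertex $w$ adjacent to all vertices of $T$, and let $b\ge1$. If $\mathrm{bw}(T)\le b$, then $G$ is outer $(5b-5)$-planar.
   Context: For a linear order $\sigma\colon V(T)\to[n]$, the stretch of an edge $\{u,v\}$ is $|\sigma(u)-\sigma(v)|$; the bandwidth $\mathrm{bw}(T)$ is the minimum over all $\sigma$ of the maximum stretch of an edge. A circular drawing is a cyclic order $(v_1,\dots,v_n)$ of the vertices; edges $\{v_i,v_j\}$ ($i<j$) and $\{v_{i'},v_{j'}\}$ ($i'<j'$) cross if $i<i'<j<j'$ or $i'<i<j'<j$; a graph is outer $k$-planar if it has a circular drawing in which every edge crosses at most $k$ edges. *)

theory Defs
  imports Main
begin

definition simple_graph :: "'a set \<Rightarrow> 'a set set \<Rightarrow> bool" where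
  "simple_graph V E \<longleftrightarrow> finite V \<and> (\<forall>e\<in>E. \<exists>u v. e = {u, v} \<and> u \<in> V \<and> v \<in> V \<and> u \<noteq> v)"

definition is_walk :: "'a set set \<Rightarrow> 'a list \<Rightarrow> bool" where
  "is_walk E xs \<longleftrightarrow> xs \<noteq> [] \<and> (\<forall>i. Suc i < length xs \<longrightarrow> {xs ! i, xs ! Suc i} \<in> E)"

definition connected_graph :: "'a set \<Rightarrow> 'a set set \<Rightarrow> bool" where
  "connected_graph V E \<longleftrightarrow>
     (\<forall>u\<in>V. \<forall>v\<in>V. \<exists>xs. is_walk E xs \<and> hd xs = u \<and> last xs = v)"

definition is_cycle :: "'a set set \<Rightarrow> 'a list \<Rightarrow> bool" where
  "is_cycle E xs \<longleftrightarrow> length xs \<ge> 3 \<and> distinct xs \<and> is_walk E xs \<and> {last xs, hd xs} \<in> E"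

definition is_tree :: "'a set \<Rightarrow> 'a set set \<Rightarrow> bool" where
  "is_tree V E \<longleftrightarrow> simple_graph V E \<and> V \<noteq> {} \<and> connected_graph V E \<and> \<not> (\<exists>xs. is_cycle E xs)"

definition linear_layout :: "'a set \<Rightarrow> ('a \<Rightarrow> nat) \<Rightarrow> bool" where
  "linear_layout V \<sigma> \<longleftrightarrow> bij_betw \<sigma> V {1..card V}"

definition max_stretch_le :: "'a set set \<Rightarrow> ('a \<Rightarrow> nat) \<Rightarrow> nat \<Rightarrow> bool" where
  "max_stretch_le E \<sigma> k \<longleftrightarrow> (\<forall>u v. {u, v} \<in> E \<longrightarrow> nat \<bar>int (\<sigma> u) - int (\<sigma> v)\<bar> \<le> k)"

definition bandwidth :: "'a set \<Rightarrow> 'a set set \<Rightarrow> nat" where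
  "bandwidth V E = (LEAST k. \<exists>\<sigma>. linear_layout V \<sigma> \<and> max_stretch_le E \<sigma> k)"

text \<open>Circular drawings: a cyclic order (v_1,...,v_n), encoded by the position map
  \<pi> : V \<rightarrow> {1..n} (\<pi> v_i = i).\<close>
definition circular_drawing :: "'a set \<Rightarrow> ('a \<Rightarrow> nat) \<Rightarrow> bool" where
  "circular_drawing V \<pi> \<longleftrightarrow> bij_betw \<pi> V {1..card V}"

definition edges_cross :: "('a \<Rightarrow> nat) \<Rightarrow> 'a set \<Rightarrow> 'a set \<Rightarrow> bool" where
  "edges_cross \<pi> e f \<longleftrightarrow>
     (\<exists>a b c d. e = {a, b} \<and> f = {c, d} \<and> \<pi> a < \<pi> b \<and> \<pi> c < \<pi> d \<and>
        ((\<pi> a < \<pi> c \<and> \<pi> c < \<pi> b \<and> \<pi> b < \<pi> d) \<or> (\<pi> c < \<pi> a \<and> \<pi> a < \<pi> d \<and> \<pi> d < \<pi> b)))"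

definition outer_k_planar :: "nat \<Rightarrow> 'a set \<Rightarrow> 'a set set \<Rightarrow> bool" where
  "outer_k_planar k V E \<longleftrightarrow>
     (\<exists>\<pi>. circular_drawing V \<pi> \<and> (\<forall>e\<in>E. card {f\<in>E. edges_cross \<pi> e f} \<le> k))"

definition apex_edges :: "'a \<Rightarrow> 'a set \<Rightarrow> 'a set set \<Rightarrow> 'a set set" where
  "apex_edges w V E = E \<union> {{w, v} | v. v \<in> V}"

end

theory Submission
  imports Defs
begin


lemma edge_other:
  assumes "simple_graph V E" "f \<in> E" "u \<in> f"
  shows "\<exists>x. f = {u,x} \<and> x \<noteq> u \<and> x \<in> V \<and> u \<in> V"
proof -
  obtain a c where ac: "f = {a, c}" "a \<in> V" "c \<in> V" "a \<noteq> c"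
    using assms(1,2) unfolding simple_graph_def by blast
  show ?thesis
  proof (cases "u = a")
    case True
    then show ?thesis using ac by blast
  next
    case False
    then have "u = c" using ac assms(3) by blast
    then show ?thesis using ac using insert_commute by metis
  qed
qed

lemma deg2_cycle:
  assumes sg: "simple_graph V E" and FE: "F \<subseteq> E" and fin: "finite S" and ne: "S \<noteq> {}"
    and sub: "\<forall>f\<in>F. f \<subseteq> S" and deg: "\<forall>v\<in>S. 2 \<le> card {f\<in>F. v \<in> f}"
  shows "\<exists>xs. is_cycle E xs"
proof -
  define P where "P = (\<lambda>p. distinct p \<and> set p \<subseteq> S \<and> is_walk F p)"
  obtain s where s: "s \<in> S" using ne by blast
  have Ps: "P [s]" using s by (simp add: P_def is_walk_def)
  have bnd: "\<forall>p. P p \<longrightarrow> length p < Suc (card S)"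
  proof (intro allI impI)
    fix p assume "P p"
    then have l: "length p = card (set p)" and sp: "set p \<subseteq> S" by (auto simp: P_def distinct_card)
    show "length p < Suc (card S)" using card_mono[OF fin sp] l by simp
  qed
  obtain p where Pp: "P p" and pmax: "\<forall>q. P q \<longrightarrow> length q \<le> length p"
    using Lattices_Big.ex_has_greatest_nat[of P "[s]" length "Suc (card S)"] Ps bnd by blast
  define n where "n = length p"
  have pne: "p \<noteq> []" using Pp by (simp add: P_def is_walk_def)
  define u where "u = last p"
  have uS: "u \<in> S" using Pp pne by (auto simp: P_def u_def)
  have u_eq: "u = p ! (n-1)" using pne by (simp add: u_def n_def last_conv_nth)
  have c2: "2 \<le> card {f\<in>F. u \<in> f}" using deg uS by blast
  then have "{f\<in>F. u \<in> f} \<noteq> {}" by (metis card.empty not_numeral_le_zero)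
  then obtain f1 where f1m: "f1 \<in> {f\<in>F. u \<in> f}" by blast
  have "card ({f\<in>F. u \<in> f} - {f1}) = card {f\<in>F. u \<in> f} - 1"
    using card_Diff_singleton[OF f1m] .
  then have "card ({f\<in>F. u \<in> f} - {f1}) \<noteq> 0" using c2 by linarith
  then have "{f\<in>F. u \<in> f} - {f1} \<noteq> {}" by (metis card.empty)
  then obtain f2 where f2m: "f2 \<in> {f\<in>F. u \<in> f} - {f1}" by blast
  from f1m have f1: "f1 \<in> F" "u \<in> f1" by auto
  from f2m have f2: "f2 \<in> F" "u \<in> f2" "f1 \<noteq> f2" by auto
  obtain x1 where x1: "f1 = {u,x1}" "x1 \<noteq> u" using edge_other[OF sg] f1 FE by blast
  obtain x2 where x2: "f2 = {u,x2}" "x2 \<noteq> u" using edge_other[OF sg] f2 FE by blast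
  have x12: "x1 \<noteq> x2" using x1 x2 f2 by auto
  obtain x where fx: "{u,x} \<in> F" "x \<noteq> u" and xpre: "n \<ge> 2 \<Longrightarrow> x \<noteq> p ! (n-2)"
  proof (cases "n \<ge> 2 \<and> x1 = p ! (n-2)")
    case True
    then show ?thesis using that[of x2] x2 f2 x12 by auto
  next
    case False
    then show ?thesis using that[of x1] x1 f1 by auto
  qed
  have xS: "x \<in> S" using sub fx by auto
  have xin: "x \<in> set p"
  proof (rule ccontr)
    assume xn: "x \<notin> set p"
    have "is_walk F (p @ [x])"
      unfolding is_walk_def
    proof (intro conjI allI impI)
      show "p @ [x] \<noteq> []" by simp
    next
      fix i assume i: "Suc i < length (p @ [x])"
      show "{(p @ [x]) ! i, (p @ [x]) ! Suc i} \<in> F"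
      proof (cases "Suc i < n")
        case True
        then show ?thesis using Pp by (simp add: P_def is_walk_def nth_append n_def)
      next
        case False
        then have "i = n - 1" "Suc i = n" using i by (auto simp: n_def)
        then show ?thesis using fx u_eq by (simp add: nth_append n_def)
      qed
    qed
    then have "P (p @ [x])" using Pp xn xS by (simp add: P_def)
    then show False using pmax by fastforce
  qed
  then obtain j where j: "j < n" "p ! j = x" by (auto simp: in_set_conv_nth n_def)
  have jn1: "j \<noteq> n-1" using j u_eq fx by auto
  then have n2: "n \<ge> 2" using j by linarith
  have "j \<noteq> n-2" using xpre[OF n2] j by auto
  then have j3: "j + 3 \<le> n" using j jn1 by linarith
  define q where "q = drop j p"
  have "is_walk E q" unfolding is_walk_def
  proof (intro conjI allI impI)
    show "q \<noteq> []" using j3 by (simp add: q_def n_def)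
  next
    fix i assume i: "Suc i < length q"
    then have "Suc (j+i) < length p" by (simp add: q_def)
    then have "{p ! (j+i), p ! Suc (j+i)} \<in> F" using Pp by (simp add: P_def is_walk_def)
    then show "{q ! i, q ! Suc i} \<in> E" using FE i by (auto simp: q_def)
  qed
  moreover have "length q \<ge> 3" using j3 by (simp add: q_def n_def)
  moreover have "distinct q" using Pp by (simp add: q_def P_def)
  moreover have "hd q = x" using j by (simp add: q_def hd_drop_conv_nth n_def)
  moreover have "last q = u" using j by (simp add: q_def u_def n_def)
  moreover have "{u, x} \<in> E" using fx FE by blast
  ultimately have "is_cycle E q" unfolding is_cycle_def by simp
  then show ?thesis by blast
qed

lemma forest_card_aux:
  assumes sg: "simple_graph V E" and acyc: "\<not> (\<exists>xs. is_cycle E xs)"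
  shows "card S = n \<Longrightarrow> finite S \<Longrightarrow> F \<subseteq> E \<Longrightarrow> \<forall>f\<in>F. f \<subseteq> S \<Longrightarrow> card F \<le> card S"
proof (induction n arbitrary: S F)
  case 0
  then have "S = {}" by simp
  then have "F = {}" using 0 sg unfolding simple_graph_def by blast
  then show ?case by simp
next
  case (Suc n)
  have finF: "finite F" 
  proof -
    have "F \<subseteq> Pow S" using Suc.prems by auto
    then show ?thesis using Suc.prems(2) by (simp add: finite_subset)
  qed
  show ?case
  proof (cases "\<exists>v\<in>S. card {f\<in>F. v \<in> f} \<le> 1")
    case True
    then obtain v where v: "v \<in> S" "card {f\<in>F. v \<in> f} \<le> 1" by blast
    define F' where "F' = {f\<in>F. v \<notin> f}"
    have "card F' \<le> card (S - {v})"
      using Suc.IH[of "S - {v}" F'] Suc.prems v by (auto simp: F'_def)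
    moreover have "F = F' \<union> {f\<in>F. v \<in> f}" by (auto simp: F'_def)
    then have "card F \<le> card F' + card {f\<in>F. v \<in> f}" by (metis card_Un_le)
    ultimately show ?thesis using v Suc.prems by auto
  next
    case False
    then have "\<forall>v\<in>S. 2 \<le> card {f\<in>F. v \<in> f}" by auto
    moreover have "S \<noteq> {}" using Suc.prems(1) by auto
    ultimately have "\<exists>xs. is_cycle E xs" using deg2_cycle[OF sg, of F S] Suc.prems(2-4) by blast
    then show ?thesis using acyc by blast
  qed
qed

lemma forest_card:
  assumes "simple_graph V E" "\<not> (\<exists>xs. is_cycle E xs)" "finite S" "F \<subseteq> E" "\<forall>f\<in>F. f \<subseteq> S"
  shows "card F \<le> card S"
  using forest_card_aux[OF assms(1,2) refl assms(3-5)] .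



lemma cross_unfold:
  assumes "edges_cross \<pi> {x,y} f" "\<pi> x < \<pi> y"
  shows "\<exists>c d. f = {c,d} \<and> \<pi> c < \<pi> d \<and>
     ((\<pi> x < \<pi> c \<and> \<pi> c < \<pi> y \<and> \<pi> y < \<pi> d) \<or> (\<pi> c < \<pi> x \<and> \<pi> x < \<pi> d \<and> \<pi> d < \<pi> y))"
proof -
  obtain a b c d where h: "{x,y} = {a,b}" "f = {c,d}" "\<pi> a < \<pi> b" "\<pi> c < \<pi> d"
    "(\<pi> a < \<pi> c \<and> \<pi> c < \<pi> b \<and> \<pi> b < \<pi> d) \<or> (\<pi> c < \<pi> a \<and> \<pi> a < \<pi> d \<and> \<pi> d < \<pi> b)"
    using assms(1) unfolding edges_cross_def by blast
  from h(1) have "(x = a \<and> y = b) \<or> (x = b \<and> y = a)" by (simp add: doubleton_eq_iff)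
  then have "x = a \<and> y = b" using h(3) assms(2) by auto
  then show ?thesis using h by blast
qed

lemma card_window:
  fixes g :: "'a \<Rightarrow> int"
  assumes "inj_on g A" "\<forall>u\<in>A. lo < g u \<and> g u < hi \<and> g u \<notin> X" "X \<subseteq> {lo<..<hi}" "finite X"
  shows "card A \<le> nat (hi - lo - 1) - card X"
proof -
  have "g ` A \<subseteq> {lo<..<hi} - X" using assms(2) by auto
  then have "card (g ` A) \<le> card ({lo<..<hi} - X)" by (intro card_mono) auto
  also have "\<dots> = card {lo<..<hi} - card X" using assms(3,4) by (simp add: card_Diff_subset)
  finally show ?thesis using card_image[OF assms(1)] by simp
qed

theorem lemma5p7:
  fixes V :: "'a set" and E :: "'a set set" and w :: 'a and b :: nat
  assumes "is_tree V E"
    and "w \<notin> V"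
    and "b \<ge> 1"
    and "bandwidth V E \<le> b"
  shows "outer_k_planar (5 * b - 5) (insert w V) (apex_edges w V E)"
proof -
  have T: "simple_graph V E \<and> V \<noteq> {} \<and> connected_graph V E \<and> \<not>(\<exists>xs. is_cycle E xs)"
    using assms(1) unfolding is_tree_def .
  have sg: "simple_graph V E" using T by (rule conjunct1)
  have acyc: "\<not>(\<exists>xs. is_cycle E xs)" using T by (elim conjE)
  have finV: "finite V" using sg by (simp add: simple_graph_def)
  define n where "n = card V"
  have edgeV: "c \<in> V \<and> d \<in> V \<and> c \<noteq> d" if "{c,d} \<in> E" for c d
  proof -
    have h: "\<forall>e\<in>E. \<exists>u v. e = {u,v} \<and> u \<in> V \<and> v \<in> V \<and> u \<noteq> v"
      using sg unfolding simple_graph_def by (rule conjunct2)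
    have "\<exists>u v. {c,d} = {u,v} \<and> u \<in> V \<and> v \<in> V \<and> u \<noteq> v" using h that by (rule bspec)
    then obtain a a' where "{c,d} = {a,a'}" "a \<in> V" "a' \<in> V" "a \<noteq> a'" by blast
    then show ?thesis by (auto simp: doubleton_eq_iff)
  qed
  have ex: "\<exists>k \<sigma>. linear_layout V \<sigma> \<and> max_stretch_le E \<sigma> k"
  proof -
    obtain \<sigma> where \<sigma>: "bij_betw \<sigma> V {1..card V}"
      using finite_same_card_bij[OF finV, of "{1..card V}"] by auto
    have "max_stretch_le E \<sigma> (card V)"
      unfolding max_stretch_le_def
    proof (intro allI impI)
      fix u v assume "{u,v} \<in> E"
      then have "u \<in> V" "v \<in> V" using edgeV by auto
      then have "\<sigma> u \<in> {1..card V}" "\<sigma> v \<in> {1..card V}" using \<sigma> by (auto simp: bij_betw_def)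
      then show "nat \<bar>int (\<sigma> u) - int (\<sigma> v)\<bar> \<le> card V" by auto
    qed
    then show ?thesis using \<sigma> by (auto simp: linear_layout_def)
  qed
  then obtain \<sigma> where lay: "linear_layout V \<sigma>" and st: "max_stretch_le E \<sigma> (bandwidth V E)"
    unfolding bandwidth_def using LeastI_ex[of "\<lambda>k. \<exists>\<sigma>. linear_layout V \<sigma> \<and> max_stretch_le E \<sigma> k"] by blast
  have bij: "bij_betw \<sigma> V {1..n}" using lay by (simp add: linear_layout_def n_def)
  have inj: "inj_on \<sigma> V" using bij by (simp add: bij_betw_def)
  have rng: "1 \<le> \<sigma> v \<and> \<sigma> v \<le> n" if "v \<in> V" for v
    using bij that by (auto simp: bij_betw_def)
  have stretch: "int (\<sigma> d) \<le> int (\<sigma> c) + int b" if "{c,d} \<in> E" for c d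
  proof -
    have "nat \<bar>int (\<sigma> d) - int (\<sigma> c)\<bar> \<le> bandwidth V E" using st that
      by (simp add: max_stretch_le_def insert_commute)
    then show ?thesis using assms(4) by linarith
  qed
  define \<pi> where "\<pi> = (\<lambda>v. if v = w then 1 else Suc (\<sigma> v))"
  have \<pi>w: "\<pi> w = 1" by (simp add: \<pi>_def)
  have \<pi>pos: "\<pi> u \<ge> 1" for u by (simp add: \<pi>_def)
  have \<pi>V: "\<pi> v = Suc (\<sigma> v)" if "v \<in> V" for v using that assms(2) by (auto simp: \<pi>_def)
  have cdraw: "circular_drawing (insert w V) \<pi>"
  proof -
    have "inj_on \<pi> V" using inj \<pi>V by (auto simp: inj_on_def)
    moreover have "\<pi> w \<notin> \<pi> ` V" using \<pi>w \<pi>V rng by force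
    ultimately have i: "inj_on \<pi> (insert w V)" using assms(2) by simp
    have "\<pi> ` V = Suc ` \<sigma> ` V" using \<pi>V by (auto simp: image_def)
    also have "\<dots> = Suc ` {1..n}" using bij by (simp add: bij_betw_def)
    also have "\<dots> = {2..Suc n}" by (simp add: image_Suc_atLeastAtMost)
    finally have "\<pi> ` insert w V = {1..Suc n}" using \<pi>w by auto
    moreover have "card (insert w V) = Suc n" using finV assms(2) by (simp add: n_def)
    ultimately show ?thesis using i by (simp add: circular_drawing_def bij_betw_def)
  qed
  have injs: "inj_on (\<lambda>u. int (\<sigma> u)) A" if "A \<subseteq> V" for A
    using inj that by (auto simp: inj_on_def)
  have finFE: "finite {f\<in>E. f \<subseteq> S}" if "S \<subseteq> V" for S
  proof -
    have "{f\<in>E. f \<subseteq> S} \<subseteq> Pow S" by auto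
    then show ?thesis using finV that by (meson finite_Pow_iff finite_subset)
  qed
  show ?thesis unfolding outer_k_planar_def
  proof (intro exI conjI ballI)
    show "circular_drawing (insert w V) \<pi>" by (rule cdraw)
  next
    fix e assume eE: "e \<in> apex_edges w V E"
    have sub_apex: "f \<in> E \<or> (\<exists>u\<in>V. f = {w,u})" if "f \<in> apex_edges w V E" for f
      using that by (auto simp: apex_edges_def)
    have bigE: "\<sigma> c \<ge> 1" if "c \<in> V" for c using rng that by blast
    consider (W) v where "v \<in> V" "e = {w,v}" | (T) "e \<in> E" using sub_apex[OF eE] by blast
    then show "card {f \<in> apex_edges w V E. edges_cross \<pi> e f} \<le> 5 * b - 5"
    proof cases
      case W
      define S where "S = {u\<in>V. u \<noteq> v \<and> int (\<sigma> v) - int b < int (\<sigma> u) \<and> int (\<sigma> u) < int (\<sigma> v) + int b}"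
      have SV: "S \<subseteq> V" by (auto simp: S_def)
      have lt: "\<pi> w < \<pi> v" using \<pi>w \<pi>V[OF W(1)] rng[OF W(1)] by simp
      have incl: "{f \<in> apex_edges w V E. edges_cross \<pi> e f} \<subseteq> {f\<in>E. f \<subseteq> S}"
      proof (intro subsetI CollectI)
        fix f assume f: "f \<in> {f \<in> apex_edges w V E. edges_cross \<pi> e f}"
        then obtain c d where cd: "f = {c,d}" "\<pi> c < \<pi> d"
          "(\<pi> w < \<pi> c \<and> \<pi> c < \<pi> v \<and> \<pi> v < \<pi> d) \<or> (\<pi> c < \<pi> w \<and> \<pi> w < \<pi> d \<and> \<pi> d < \<pi> v)"
          using cross_unfold[of \<pi> w v f] lt W(2) by blast
        have c1: "\<pi> w < \<pi> c" "\<pi> c < \<pi> v" "\<pi> v < \<pi> d" using cd(3) \<pi>w \<pi>pos[of c] by auto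
        have cw: "c \<noteq> w" "d \<noteq> w" using c1 by auto
        have fE: "f \<in> E"
        proof -
          have "f \<in> E \<or> (\<exists>u\<in>V. f = {w,u})" using sub_apex f by blast
          moreover have "w \<notin> f" using cd(1) cw by auto
          ultimately show ?thesis by blast
        qed
        have cV: "c \<in> V" "d \<in> V" using edgeV fE cd(1) by auto
        have s: "\<sigma> c < \<sigma> v" "\<sigma> v < \<sigma> d" using c1 \<pi>V cV W(1) by auto
        have "int (\<sigma> d) \<le> int (\<sigma> c) + int b" using stretch fE cd(1) by blast
        then have "c \<in> S" "d \<in> S" using s cV by (auto simp: S_def)
        then show "f \<in> E \<and> f \<subseteq> S" using fE cd(1) by auto
      qed
      have "card S \<le> nat ((int (\<sigma> v) + int b) - (int (\<sigma> v) - int b) - 1) - card {int (\<sigma> v)}"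
        by (rule card_window[OF injs[OF SV]]) (use assms(3) inj W(1) in \<open>auto simp: S_def inj_on_def\<close>)
      then have cS: "card S \<le> 2 * b - 2" by simp
      have "card {f\<in>E. f \<subseteq> S} \<le> card S"
        by (rule forest_card[OF sg acyc]) (use SV finV in \<open>auto intro: finite_subset\<close>)
      moreover have "card {f \<in> apex_edges w V E. edges_cross \<pi> e f} \<le> card {f\<in>E. f \<subseteq> S}"
        by (rule card_mono[OF finFE[OF SV] incl])
      ultimately show ?thesis using cS by linarith
    next
      case T
      obtain x0 y0 where e0: "e = {x0,y0}" using sg T unfolding simple_graph_def by blast
      have xy0: "x0 \<in> V" "y0 \<in> V" "x0 \<noteq> y0" using edgeV T e0 by auto
      have "\<sigma> x0 \<noteq> \<sigma> y0" using inj xy0 by (auto simp: inj_on_def)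
      then obtain x y where exy: "e = {x,y}" "x \<in> V" "y \<in> V" "\<sigma> x < \<sigma> y"
      proof (cases "\<sigma> x0 < \<sigma> y0")
        case True then show ?thesis using that[of x0 y0] e0 xy0 by blast
      next
        case False then show ?thesis using that[of y0 x0] e0 xy0 \<open>\<sigma> x0 \<noteq> \<sigma> y0\<close>
          by (simp add: insert_commute)
      qed
      have sxy: "int (\<sigma> y) \<le> int (\<sigma> x) + int b" using stretch T exy(1) by blast
      define S where "S = {u\<in>V. u \<noteq> x \<and> u \<noteq> y \<and> int (\<sigma> x) - int b < int (\<sigma> u) \<and> int (\<sigma> u) < int (\<sigma> y) + int b}"
      define M where "M = {u\<in>V. \<sigma> x < \<sigma> u \<and> \<sigma> u < \<sigma> y}"
      have SV: "S \<subseteq> V" by (auto simp: S_def)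
      have MV: "M \<subseteq> V" by (auto simp: M_def)
      have lt: "\<pi> x < \<pi> y" using \<pi>V exy by simp
      have incl: "{f \<in> apex_edges w V E. edges_cross \<pi> e f} \<subseteq> {f\<in>E. f \<subseteq> S} \<union> (\<lambda>u. {w,u}) ` M"
      proof
        fix f assume f: "f \<in> {f \<in> apex_edges w V E. edges_cross \<pi> e f}"
        then obtain c d where cd: "f = {c,d}" "\<pi> c < \<pi> d"
          "(\<pi> x < \<pi> c \<and> \<pi> c < \<pi> y \<and> \<pi> y < \<pi> d) \<or> (\<pi> c < \<pi> x \<and> \<pi> x < \<pi> d \<and> \<pi> d < \<pi> y)"
          using cross_unfold[of \<pi> x y f] lt exy(1) by blast
        have "f \<in> E \<or> (\<exists>u\<in>V. f = {w,u})" using sub_apex f by blast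
        then show "f \<in> {f\<in>E. f \<subseteq> S} \<union> (\<lambda>u. {w,u}) ` M"
        proof
          assume fE: "f \<in> E"
          have cV: "c \<in> V" "d \<in> V" using edgeV fE cd(1) by auto
          have st2: "int (\<sigma> d) \<le> int (\<sigma> c) + int b" using stretch fE cd(1) by blast
          have "(\<sigma> x < \<sigma> c \<and> \<sigma> c < \<sigma> y \<and> \<sigma> y < \<sigma> d) \<or> (\<sigma> c < \<sigma> x \<and> \<sigma> x < \<sigma> d \<and> \<sigma> d < \<sigma> y)"
            using cd(3) \<pi>V cV exy by auto
          then have "c \<in> S" "d \<in> S" using st2 sxy cV by (auto simp: S_def)
          then show ?thesis using fE cd(1) by auto
        next
          assume "\<exists>u\<in>V. f = {w,u}"
          then obtain u where u: "u \<in> V" "f = {w,u}" by blast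
          have "\<pi> x \<ge> 2" "\<pi> y \<ge> 2" using \<pi>V exy rng by auto
          then have "c \<noteq> w \<and> d \<noteq> w \<longrightarrow> False" using u cd(1) by (auto simp: doubleton_eq_iff)
          have cw: "c = w \<and> d = u"
          proof -
            have "(c = w \<and> d = u) \<or> (c = u \<and> d = w)" using u cd(1) by (auto simp: doubleton_eq_iff)
            moreover have "d \<noteq> w" using cd(3) \<pi>w \<open>\<pi> x \<ge> 2\<close> by auto
            ultimately show ?thesis by blast
          qed
          then have "\<pi> x < \<pi> u" "\<pi> u < \<pi> y" using cd(3) \<pi>w \<open>\<pi> x \<ge> 2\<close> by auto
          then have "u \<in> M" using u \<pi>V exy by (auto simp: M_def)
          then show ?thesis using u by auto
        qed
      qed
      have "card S \<le> nat ((int (\<sigma> y) + int b) - (int (\<sigma> x) - int b) - 1) - card {int (\<sigma> x), int (\<sigma> y)}"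
        by (rule card_window[OF injs[OF SV]]) (use assms(3) exy sxy inj in \<open>auto simp: S_def inj_on_def\<close>)
      then have cS: "card S \<le> 3 * b - 3" using exy(4) sxy by simp
      have "card M \<le> nat (int (\<sigma> y) - int (\<sigma> x) - 1) - card ({}::int set)"
        by (rule card_window[OF injs[OF MV]]) (auto simp: M_def)
      then have cM: "card M \<le> b - 1" using sxy by simp
      have finM: "finite M" using MV finV finite_subset by blast
      have c1: "card {f\<in>E. f \<subseteq> S} \<le> card S"
        by (rule forest_card[OF sg acyc]) (use SV finV in \<open>auto intro: finite_subset\<close>)
      have c2: "card ((\<lambda>u. {w,u}) ` M) \<le> card M" by (rule card_image_le[OF finM])
      have "card {f \<in> apex_edges w V E. edges_cross \<pi> e f} \<le> card ({f\<in>E. f \<subseteq> S} \<union> (\<lambda>u. {w,u}) ` M)"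
        by (rule card_mono[OF _ incl]) (use finFE[OF SV] finM in simp)
      also have "\<dots> \<le> card {f\<in>E. f \<subseteq> S} + card ((\<lambda>u. {w,u}) ` M)" by (rule card_Un_le)
      finally show ?thesis using c1 c2 cS cM assms(3) by linarith
    qed
  qed
qed

end
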